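(* Let $G$ be a finite simple connected graph with exactly $h$ holes. Suppose that all the holes in $G$ are pairwise edge-disjoint and that $G$ has exactly one non-edge maximal clique $K$. If, for some edge $e$ of a hole $H$ of $G$, the graph $G-e$ has at least $h$ holes, then $e$ is an edge of $K$. Moreover, in that case, writing $e=v_iv_j$, every hole of $G-e$ which is not a hole of $G$ has the form $(H-v_iv_j)\cup\{v_iv_k,v_jv_k\}$ for some vertex $v_k$ of $K$.
   Context: A hole of a graph is an induced (chordless) cycle of length at least $4$. A clique is a complete subgraph; a clique is non-edge if it has at least $3$ vertices. $G-e$ denotes the graph obtained from $G$ by deleting the edge $e$. *)

theory Defs
  imports Main
begin

definition simple_graph :: "'a set \<Rightarrow> 'a set set \<Rightarrow> bool" where
  "simple_graph V Ed \<longleftrightarrow> finite V \<and>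
     (\<forall>e\<in>Ed. \<exists>u v. e = {u, v} \<and> u \<noteq> v \<and> u \<in> V \<and> v \<in> V)"

definition adj :: "'a set set \<Rightarrow> 'a \<Rightarrow> 'a \<Rightarrow> bool" where
  "adj Ed u v \<longleftrightarrow> u \<noteq> v \<and> {u, v} \<in> Ed"

definition graph_connected :: "'a set \<Rightarrow> 'a set set \<Rightarrow> bool" where
  "graph_connected V Ed \<longleftrightarrow> V \<noteq> {} \<and>
     (\<forall>u\<in>V. \<forall>v\<in>V. (\<lambda>x y. x \<in> V \<and> y \<in> V \<and> adj Ed x y)\<^sup>*\<^sup>* u v)"

definition induced_edges :: "'a set set \<Rightarrow> 'a set \<Rightarrow> 'a set set" where
  "induced_edges Ed S = {e \<in> Ed. e \<subseteq> S}"

definition is_cycle :: "'a set \<Rightarrow> 'a set set \<Rightarrow> bool" where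
  "is_cycle S F \<longleftrightarrow> finite S \<and> card S \<ge> 3 \<and> graph_connected S F \<and>
     (\<forall>e\<in>F. e \<subseteq> S) \<and> (\<forall>v\<in>S. card {e \<in> F. v \<in> e} = 2)"

definition is_hole :: "'a set \<Rightarrow> 'a set set \<Rightarrow> 'a set \<Rightarrow> bool" where
  "is_hole V Ed S \<longleftrightarrow> S \<subseteq> V \<and> card S \<ge> 4 \<and> is_cycle S (induced_edges Ed S)"

definition holes :: "'a set \<Rightarrow> 'a set set \<Rightarrow> 'a set set" where
  "holes V Ed = {S. is_hole V Ed S}"

definition is_clique :: "'a set \<Rightarrow> 'a set set \<Rightarrow> 'a set \<Rightarrow> bool" where
  "is_clique V Ed K \<longleftrightarrow> K \<subseteq> V \<and> (\<forall>u\<in>K. \<forall>v\<in>K. u \<noteq> v \<longrightarrow> {u, v} \<in> Ed)"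

definition maximal_clique :: "'a set \<Rightarrow> 'a set set \<Rightarrow> 'a set \<Rightarrow> bool" where
  "maximal_clique V Ed K \<longleftrightarrow> is_clique V Ed K \<and>
     (\<forall>K'. is_clique V Ed K' \<and> K \<subseteq> K' \<longrightarrow> K' = K)"

end

theory Submission
  imports Defs
begin

lemma two_eq: "f = {u,v} \<Longrightarrow> x \<in> f \<Longrightarrow> y \<in> f \<Longrightarrow> x \<noteq> y \<Longrightarrow> f = {x,y}" by blast

lemma nbr_card:
  assumes "\<forall>f\<in>E. \<exists>u v. f = {u,v} \<and> u \<noteq> v"
  shows "card {f\<in>E. x \<in> f} = card {y. adj E x y}"
proof -
  have eq: "{f\<in>E. x \<in> f} = (\<lambda>y. {x,y}) ` {y. adj E x y}"
  proof
    show "{f\<in>E. x \<in> f} \<subseteq> (\<lambda>y. {x,y}) ` {y. adj E x y}"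
    proof
      fix f assume f: "f \<in> {f\<in>E. x \<in> f}"
      then obtain u v where uv: "f = {u,v}" "u \<noteq> v" using assms by blast
      show "f \<in> (\<lambda>y. {x,y}) ` {y. adj E x y}"
      proof (cases "x = u")
        case True
        then show ?thesis using f uv by (auto simp: adj_def image_iff)
      next
        case False
        then have "x = v" using f uv by auto
        then show ?thesis using f uv by (auto simp: adj_def image_iff insert_commute)
      qed
    qed
  qed (auto simp: adj_def)
  have "inj_on (\<lambda>y. {x,y}) {y. adj E x y}"
    by (auto simp: inj_on_def adj_def doubleton_eq_iff)
  then show ?thesis using eq card_image by metis
qed

lemma conn_closed:
  assumes "graph_connected S F" "X \<subseteq> S" "x0 \<in> X"
    and "\<forall>x\<in>X. \<forall>y\<in>S. adj F x y \<longrightarrow> y \<in> X"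
  shows "X = S"
proof
  show "S \<subseteq> X"
  proof
    fix y assume y: "y \<in> S"
    have "(\<lambda>x y. x \<in> S \<and> y \<in> S \<and> adj F x y)\<^sup>*\<^sup>* x0 y"
      using assms(1,2,3) y unfolding graph_connected_def by blast
    then show "y \<in> X"
      by (induction rule: rtranclp_induct) (use assms in auto)
  qed
qed (use assms in auto)

lemma rtranclp_cross:
  "r\<^sup>*\<^sup>* a y \<Longrightarrow> a \<in> X \<Longrightarrow> y \<notin> X \<Longrightarrow> \<exists>x z. r\<^sup>*\<^sup>* a x \<and> x \<in> X \<and> z \<notin> X \<and> r x z"
proof (induction rule: rtranclp_induct)
  case base then show ?case by simp
next
  case (step y z)
  then show ?case by (cases "y \<in> X") auto
qed

lemma rtranclp_sym':
  assumes "\<And>x y. r x y \<Longrightarrow> r y x"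
  shows "r\<^sup>*\<^sup>* x y \<Longrightarrow> r\<^sup>*\<^sup>* y x"
proof (induction rule: rtranclp_induct)
  case base then show ?case by simp
next
  case (step y z)
  then show ?case using assms converse_rtranclp_into_rtranclp by metis
qed

lemma tree_count:
  assumes fin: "finite T" and ne: "T \<noteq> {}"
    and irr: "\<And>x. \<not> A x x"
    and cross: "\<And>X. X \<subseteq> T \<Longrightarrow> X \<noteq> {} \<Longrightarrow> X \<noteq> T \<Longrightarrow> \<exists>u\<in>X. \<exists>w\<in>T-X. A u w \<and> A w u"
  shows "2 * card T \<le> card {(x,y). x\<in>T \<and> y\<in>T \<and> A x y} + 2"
proof -
  have main: "\<forall>k. 1 \<le> k \<and> k \<le> card T \<longrightarrow>
     (\<exists>X\<subseteq>T. card X = k \<and> 2 * k \<le> card {(x,y). x\<in>X \<and> y\<in>X \<and> A x y} + 2)"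
  proof
    fix k show "1 \<le> k \<and> k \<le> card T \<longrightarrow>
     (\<exists>X\<subseteq>T. card X = k \<and> 2 * k \<le> card {(x,y). x\<in>X \<and> y\<in>X \<and> A x y} + 2)"
    proof (induction k)
      case 0 then show ?case by simp
    next
      case (Suc k)
      show ?case
      proof
        assume k: "1 \<le> Suc k \<and> Suc k \<le> card T"
        show "\<exists>X\<subseteq>T. card X = Suc k \<and> 2 * Suc k \<le> card {(x,y). x\<in>X \<and> y\<in>X \<and> A x y} + 2"
        proof (cases "k = 0")
          case True
          obtain t where "t \<in> T" using ne by blast
          then show ?thesis using True by (intro exI[of _ "{t}"]) auto
        next
          case False
          then obtain X where X: "X \<subseteq> T" "card X = k"
            "2 * k \<le> card {(x,y). x\<in>X \<and> y\<in>X \<and> A x y} + 2"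
            using Suc.IH k by auto
          have "X \<noteq> {}" using X(2) False by auto
          moreover have "X \<noteq> T" using X(2) k by auto
          ultimately obtain u w where uw: "u \<in> X" "w \<in> T - X" "A u w" "A w u"
            using cross X(1) by blast
          define Y where "Y = insert w X"
          have finX: "finite X" using X(1) fin finite_subset by blast
          have PX: "finite {(x,y). x\<in>X \<and> y\<in>X \<and> A x y}"
            by (rule finite_subset[of _ "X \<times> X"]) (use finX in auto)
          have sub: "{(x,y). x\<in>X \<and> y\<in>X \<and> A x y} \<union> {(u,w),(w,u)} \<subseteq> {(x,y). x\<in>Y \<and> y\<in>Y \<and> A x y}"
            using uw unfolding Y_def by auto
          have finY: "finite {(x,y). x\<in>Y \<and> y\<in>Y \<and> A x y}"
            by (rule finite_subset[of _ "Y \<times> Y"]) (use finX Y_def in auto)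
          have "u \<noteq> w" using uw by auto
          have dj: "{(x,y). x\<in>X \<and> y\<in>X \<and> A x y} \<inter> {(u,w),(w,u)} = {}" using uw by auto
          have "card ({(x,y). x\<in>X \<and> y\<in>X \<and> A x y} \<union> {(u,w),(w,u)}) =
                card {(x,y). x\<in>X \<and> y\<in>X \<and> A x y} + 2"
            using card_Un_disjoint[OF PX _ dj] \<open>u \<noteq> w\<close> by auto
          then have "card {(x,y). x\<in>X \<and> y\<in>X \<and> A x y} + 2 \<le> card {(x,y). x\<in>Y \<and> y\<in>Y \<and> A x y}"
            using card_mono[OF finY sub] by simp
          moreover have "card Y = Suc k" using X(2) uw finX Y_def by auto
          moreover have "Y \<subseteq> T" using X(1) uw Y_def by auto
          ultimately show ?thesis using X(3) by (intro exI[of _ Y]) auto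
        qed
      qed
    qed
  qed
  have "1 \<le> card T" using fin ne by (simp add: Suc_le_eq card_gt_0_iff)
  then obtain X where X: "X \<subseteq> T" "card X = card T"
      "2 * card T \<le> card {(x,y). x\<in>X \<and> y\<in>X \<and> A x y} + 2" using main by blast
  have "X = T" using card_subset_eq[OF fin X(1) X(2)] .
  then show ?thesis using X(3) by simp
qed

lemma pairs_even:
  fixes F :: "'a set set"
  assumes two: "\<forall>f\<in>F. \<exists>u v. f = {u,v} \<and> u \<noteq> v" and fin: "finite R"
  shows "even (card {(x,y). x\<in>R \<and> y\<in>R \<and> adj F x y})"
proof -
  define I where "I = {f\<in>F. f \<subseteq> R}"
  define P where "P = (\<lambda>f::'a set. {(x,y). x \<in> f \<and> y \<in> f \<and> x \<noteq> y})"
  have eq: "{(x,y). x\<in>R \<and> y\<in>R \<and> adj F x y} = (\<Union>f\<in>I. P f)"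
  proof
    show "{(x,y). x\<in>R \<and> y\<in>R \<and> adj F x y} \<subseteq> (\<Union>f\<in>I. P f)"
    proof
      fix p assume "p \<in> {(x,y). x\<in>R \<and> y\<in>R \<and> adj F x y}"
      then obtain x y where "p = (x,y)" "x \<in> R" "y \<in> R" "{x,y} \<in> F" "x \<noteq> y" by (auto simp: adj_def)
      then show "p \<in> (\<Union>f\<in>I. P f)" unfolding I_def P_def by (intro UN_I[of "{x,y}"]) auto
    qed
    show "(\<Union>f\<in>I. P f) \<subseteq> {(x,y). x\<in>R \<and> y\<in>R \<and> adj F x y}"
    proof
      fix p assume "p \<in> (\<Union>f\<in>I. P f)"
      then obtain f x y where f: "f \<in> F" "f \<subseteq> R" "x \<in> f" "y \<in> f" "x \<noteq> y" "p = (x,y)"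
        unfolding I_def P_def by auto
      obtain u v where "f = {u,v}" "u \<noteq> v" using two f(1) by blast
      then have "f = {x,y}" using f two_eq by metis
      then show "p \<in> {(x,y). x\<in>R \<and> y\<in>R \<and> adj F x y}" using f by (auto simp: adj_def)
    qed
  qed
  have finI: "finite I" unfolding I_def
    by (rule finite_subset[of _ "Pow R"]) (use fin in auto)
  have c2: "\<forall>f\<in>I. card (P f) = 2"
  proof
    fix f assume "f \<in> I"
    then have "f \<in> F" by (simp add: I_def)
    then obtain u v where uv: "f = {u,v}" "u \<noteq> v" using two by blast
    then have "P f = {(u,v),(v,u)}" unfolding P_def by auto
    then show "card (P f) = 2" using uv by auto
  qed
  have finP: "\<forall>f\<in>I. finite (P f)"
  proof
    fix f assume "f \<in> I"
    then have "card (P f) = 2" using c2 by auto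
    then show "finite (P f)" by (metis card.infinite zero_neq_numeral)
  qed
  have dj: "\<forall>f\<in>I. \<forall>g\<in>I. f \<noteq> g \<longrightarrow> P f \<inter> P g = {}"
  proof (intro ballI impI)
    fix f g assume fg: "f \<in> I" "g \<in> I" "f \<noteq> g"
    have fF: "f \<in> F" "g \<in> F" using fg by (simp_all add: I_def)
    show "P f \<inter> P g = {}"
    proof (rule ccontr)
      assume "P f \<inter> P g \<noteq> {}"
      then obtain p where "p \<in> P f" "p \<in> P g" by blast
      then obtain x y where xy: "x \<in> f" "y \<in> f" "x \<in> g" "y \<in> g" "x \<noteq> y" unfolding P_def by blast
      obtain u v where "f = {u,v}" using two fF by blast
      then have "f = {x,y}" using xy two_eq by metis
      moreover obtain u' v' where "g = {u',v'}" using two fF by blast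
      then have "g = {x,y}" using xy two_eq by metis
      ultimately show False using fg by simp
    qed
  qed
  have "card (\<Union>f\<in>I. P f) = (\<Sum>f\<in>I. card (P f))"
    using card_UN_disjoint[OF finI finP dj] .
  also have "\<dots> = 2 * card I" using c2 by simp
  finally show ?thesis using eq by simp
qed


context
  fixes S :: "'a set" and F :: "'a set set" and vi vj :: 'a
  assumes cyc: "is_cycle S F"
    and two: "\<forall>f\<in>F. \<exists>u v. f = {u,v} \<and> u \<noteq> v"
    and vi: "vi \<in> S" and vj: "vj \<in> S" and vij: "vi \<noteq> vj"
    and nadj: "\<not> adj F vi vj"
begin

lemma finS: "finite S" using cyc by (simp add: is_cycle_def)

lemma conn: "graph_connected S F" using cyc by (simp add: is_cycle_def)

lemma adj_in: "adj F x y \<Longrightarrow> x \<in> S \<and> y \<in> S"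
  using cyc unfolding is_cycle_def adj_def by blast

lemma adj_sym: "adj F x y \<Longrightarrow> adj F y x"
  by (auto simp: adj_def insert_commute)

lemma adj_irr: "\<not> adj F x x" by (simp add: adj_def)

lemma deg: "v \<in> S \<Longrightarrow> card {y. adj F v y} = 2"
  using cyc nbr_card[OF two, of v] unfolding is_cycle_def by simp

lemma nbr_fin: "finite {y. adj F v y}"
  by (rule finite_subset[OF _ finS]) (use adj_in in blast)

definition Q where "Q x y \<longleftrightarrow> x \<in> S - {vi,vj} \<and> y \<in> S - {vi,vj} \<and> adj F x y"
definition ccomp where "ccomp a = {y. Q\<^sup>*\<^sup>* a y}"

lemma Q_sym: "Q x y \<Longrightarrow> Q y x" by (auto simp: Q_def adj_sym)

lemma comp_sub: assumes "a \<in> S - {vi,vj}" shows "ccomp a \<subseteq> S - {vi,vj}"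
proof
  fix y assume "y \<in> ccomp a"
  then have "Q\<^sup>*\<^sup>* a y" by (simp add: ccomp_def)
  then show "y \<in> S - {vi,vj}"
    by (induction rule: rtranclp_induct) (use assms in \<open>auto simp: Q_def\<close>)
qed

lemma comp_self: "a \<in> ccomp a" by (simp add: ccomp_def)

lemma comp_fin: "a \<in> S - {vi,vj} \<Longrightarrow> finite (ccomp a)"
  using comp_sub finS finite_subset by blast

lemma comp_closed:
  assumes a: "a \<in> S - {vi,vj}" and x: "x \<in> ccomp a" and xy: "adj F x y"
  shows "y \<in> ccomp a \<or> y = vi \<or> y = vj"
proof (cases "y = vi \<or> y = vj")
  case False
  have "x \<in> S - {vi,vj}" using comp_sub[OF a] x by blast
  moreover have "y \<in> S" using adj_in xy by blast
  ultimately have "Q x y" using False xy by (simp add: Q_def)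
  moreover have "Q\<^sup>*\<^sup>* a x" using x by (simp add: ccomp_def)
  ultimately have "Q\<^sup>*\<^sup>* a y" by simp
  then show ?thesis by (simp add: ccomp_def)
qed simp

lemma comp_cross:
  assumes a: "a \<in> S - {vi,vj}" and X: "X \<subseteq> ccomp a" "X \<noteq> {}" "X \<noteq> ccomp a"
  shows "\<exists>u\<in>X. \<exists>w\<in>ccomp a - X. adj F u w \<and> adj F w u"
proof (cases "a \<in> X")
  case True
  obtain y where y: "y \<in> ccomp a" "y \<notin> X" using X by blast
  then have "Q\<^sup>*\<^sup>* a y" by (simp add: ccomp_def)
  then obtain x z where xz: "Q\<^sup>*\<^sup>* a x" "x \<in> X" "z \<notin> X" "Q x z"
    using rtranclp_cross[of Q a y X] True y by blast
  then have "Q\<^sup>*\<^sup>* a z" by simp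
  then have "z \<in> ccomp a" by (simp add: ccomp_def)
  then show ?thesis using xz adj_sym by (auto simp: Q_def)
next
  case False
  obtain y where y: "y \<in> X" using X by blast
  have "Q\<^sup>*\<^sup>* a y" using y X by (auto simp: ccomp_def)
  moreover have "a \<in> ccomp a - X" using False comp_self by blast
  moreover have "y \<notin> ccomp a - X" using y by blast
  ultimately obtain x z where xz: "Q\<^sup>*\<^sup>* a x" "x \<in> ccomp a - X" "z \<notin> ccomp a - X" "Q x z"
    using rtranclp_cross[of Q a y "ccomp a - X"] by blast
  then have "Q\<^sup>*\<^sup>* a z" by simp
  then have "z \<in> ccomp a" by (simp add: ccomp_def)
  then have "z \<in> X" using xz by blast
  then show ?thesis using xz adj_sym by (auto simp: Q_def)
qed


lemma counts:
  assumes aS: "a \<in> S" and va: "adj F vi a"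
  shows "card {x\<in>ccomp a. adj F vi x} = 1 \<and> card {x\<in>ccomp a. adj F vj x} = 1"
proof -
  have a: "a \<in> S - {vi,vj}" using aS va adj_irr nadj by auto
  define R where "R = ccomp a"
  have finR: "finite R" using comp_fin[OF a] R_def by simp
  have RS: "R \<subseteq> S - {vi,vj}" using comp_sub[OF a] R_def by simp
  define P where "P = {(x,y). x\<in>R \<and> y\<in>R \<and> adj F x y}"
  define Ni where "Ni = {x\<in>R. adj F vi x}"
  define Nj where "Nj = {x\<in>R. adj F vj x}"
  define D where "D = Sigma R (\<lambda>x. {y. adj F x y})"
  have finNi: "finite Ni" "finite Nj" using finR Ni_def Nj_def by auto
  have "card D = (\<Sum>x\<in>R. card {y. adj F x y})"
    unfolding D_def using finR nbr_fin by (simp add: card_SigmaI)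
  also have "\<dots> = (\<Sum>x\<in>R. 2)" using deg RS by (intro sum.cong) auto
  finally have cD: "card D = 2 * card R" by simp
  have Deq: "D = P \<union> ((Ni \<times> {vi}) \<union> (Nj \<times> {vj}))"
  proof
    show "D \<subseteq> P \<union> ((Ni \<times> {vi}) \<union> (Nj \<times> {vj}))"
    proof
      fix p assume "p \<in> D"
      then obtain x y where p: "p = (x,y)" "x \<in> R" "adj F x y" unfolding D_def by blast
      then have "y \<in> R \<or> y = vi \<or> y = vj" using comp_closed[OF a] R_def by blast
      then show "p \<in> P \<union> ((Ni \<times> {vi}) \<union> (Nj \<times> {vj}))"
        using p adj_sym unfolding P_def Ni_def Nj_def by auto
    qed
    show "P \<union> ((Ni \<times> {vi}) \<union> (Nj \<times> {vj})) \<subseteq> D"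
      unfolding D_def P_def Ni_def Nj_def using adj_sym by auto
  qed
  have finP: "finite P"
    by (rule finite_subset[of _ "R \<times> R"]) (use finR P_def in auto)
  have dj1: "P \<inter> ((Ni \<times> {vi}) \<union> (Nj \<times> {vj})) = {}" using RS unfolding P_def by auto
  have dj2: "(Ni \<times> {vi}) \<inter> (Nj \<times> {vj}) = {}" using vij by auto
  have "card D = card P + (card (Ni \<times> {vi}) + card (Nj \<times> {vj}))"
    using Deq card_Un_disjoint[OF finP _ dj1] card_Un_disjoint[OF _ _ dj2] finNi by simp
  then have eq: "2 * card R = card P + card Ni + card Nj" using cD by (simp add: card_cartesian_product)
  have ev: "even (card P)" unfolding P_def using pairs_even[OF two finR] .
  have tr: "2 * card R \<le> card P + 2" unfolding P_def
  proof (rule tree_count[OF finR])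
    show "R \<noteq> {}" using comp_self R_def by blast
    show "\<And>x. \<not> adj F x x" by (rule adj_irr)
    show "\<And>X. X \<subseteq> R \<Longrightarrow> X \<noteq> {} \<Longrightarrow> X \<noteq> R \<Longrightarrow> \<exists>u\<in>X. \<exists>w\<in>R - X. adj F u w \<and> adj F w u"
      using comp_cross[OF a] R_def by blast
  qed
  have ni1: "1 \<le> card Ni"
  proof -
    have "a \<in> Ni" using comp_self va R_def Ni_def by blast
    then show ?thesis using finNi card_gt_0_iff by (metis One_nat_def Suc_leI empty_iff)
  qed
  have ni2: "card Ni \<le> 2"
  proof -
    have "Ni \<subseteq> {y. adj F vi y}" using Ni_def by auto
    then show ?thesis using card_mono[OF nbr_fin] deg[OF vi] by metis
  qed
  have cases: "(card Ni = 1 \<and> card Nj = 1) \<or> (card Ni = 2 \<and> card Nj = 0)"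
    using eq ev tr ni1 ni2 by presburger
  moreover have "\<not> (card Ni = 2 \<and> card Nj = 0)"
  proof
    assume c: "card Ni = 2 \<and> card Nj = 0"
    then have Nj0: "Nj = {}" using finNi by simp
    have NiN: "Ni = {y. adj F vi y}"
      using card_subset_eq[OF nbr_fin, of Ni] c deg[OF vi] Ni_def by auto
    have "insert vi R = S"
    proof (rule conn_closed[OF conn])
      show "insert vi R \<subseteq> S" using RS vi by auto
      show "vi \<in> insert vi R" by simp
      show "\<forall>x\<in>insert vi R. \<forall>y\<in>S. adj F x y \<longrightarrow> y \<in> insert vi R"
      proof (intro ballI impI)
        fix x y assume x: "x \<in> insert vi R" and y: "y \<in> S" and xy: "adj F x y"
        show "y \<in> insert vi R"
        proof (cases "x = vi")
          case True
          then have "y \<in> Ni" using NiN xy by simp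
          then show ?thesis using Ni_def by simp
        next
          case False
          then have xR: "x \<in> R" using x by simp
          then have "y \<in> R \<or> y = vi \<or> y = vj" using comp_closed[OF a] R_def xy by blast
          moreover have "y \<noteq> vj"
          proof
            assume "y = vj"
            then have "x \<in> Nj" using xR xy adj_sym Nj_def by blast
            then show False using Nj0 by simp
          qed
          ultimately show ?thesis by blast
        qed
      qed
    qed
    then show False using vj vij RS by blast
  qed
  ultimately show ?thesis unfolding Ni_def Nj_def R_def by blast
qed


lemma comp_cycle:
  assumes aS: "a \<in> S" and va: "adj F vi a"
  shows "is_cycle (ccomp a \<union> {vi,vj}) {f \<in> insert {vi,vj} F. f \<subseteq> ccomp a \<union> {vi,vj}}"
    and "card (ccomp a \<union> {vi,vj}) = card (ccomp a) + 2"
proof -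
  have a: "a \<in> S - {vi,vj}" using aS va adj_irr nadj by auto
  define R where "R = ccomp a"
  define T where "T = R \<union> {vi,vj}"
  define E where "E = {f \<in> insert {vi,vj} F. f \<subseteq> T}"
  have finR: "finite R" using comp_fin[OF a] R_def by simp
  have RS: "R \<subseteq> S - {vi,vj}" using comp_sub[OF a] R_def by simp
  have aR: "a \<in> R" using comp_self R_def by simp
  have cnt: "card {x\<in>R. adj F vi x} = 1" "card {x\<in>R. adj F vj x} = 1"
    using counts[OF aS va] R_def by auto
  have cT: "card T = card R + 2" using finR RS vij unfolding T_def
    by (subst card_Un_disjoint) auto
  have two': "\<forall>f\<in>E. \<exists>u v. f = {u,v} \<and> u \<noteq> v" using two vij unfolding E_def by auto
  have adjE: "\<And>x y. adj E x y \<longleftrightarrow> x \<noteq> y \<and> x \<in> T \<and> y \<in> T \<and> ({x,y} \<in> F \<or> {x,y} = {vi,vj})"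
    unfolding adj_def E_def by auto
  have adjF_T: "\<And>x y. x \<in> R \<Longrightarrow> adj F x y \<Longrightarrow> y \<in> T"
    using comp_closed[OF a] R_def T_def by blast
  have degT: "\<And>v. v \<in> T \<Longrightarrow> card {y. adj E v y} = 2"
  proof -
    fix v assume vT: "v \<in> T"
    show "card {y. adj E v y} = 2"
    proof (cases "v \<in> R")
      case True
      have "{y. adj E v y} = {y. adj F v y}"
      proof (intro set_eqI iffI)
        fix y assume "y \<in> {y. adj E v y}"
        then have "v \<noteq> y" "{v,y} \<in> F \<or> {v,y} = {vi,vj}" using adjE by auto
        moreover have "{v,y} \<noteq> {vi,vj}" using True RS by (auto simp: doubleton_eq_iff)
        ultimately show "y \<in> {y. adj F v y}" by (simp add: adj_def)
      next
        fix y assume "y \<in> {y. adj F v y}"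
        then have "adj F v y" by simp
        then have "v \<noteq> y" "{v,y} \<in> F" by (simp_all add: adj_def)
        moreover have "y \<in> T" using adjF_T[OF True] \<open>adj F v y\<close> by blast
        moreover have "v \<in> T" using True T_def by simp
        ultimately show "y \<in> {y. adj E v y}" using adjE by simp
      qed
      then show ?thesis using deg RS True by auto
    next
      case False
      then have "v = vi \<or> v = vj" using vT T_def by auto
      then show ?thesis
      proof
        assume v: "v = vi"
        have "{y. adj E v y} = insert vj {x\<in>R. adj F vi x}"
        proof (intro set_eqI iffI)
          fix y assume "y \<in> {y. adj E v y}"
          then have y: "vi \<noteq> y" "y \<in> T" "{vi,y} \<in> F \<or> {vi,y} = {vi,vj}" using adjE v by auto
          show "y \<in> insert vj {x\<in>R. adj F vi x}"
          proof (cases "y = vj")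
            case False
            then have "{vi,y} \<in> F" using y by (auto simp: doubleton_eq_iff)
            then show ?thesis using y T_def by (auto simp: adj_def)
          qed simp
        next
          fix y assume "y \<in> insert vj {x\<in>R. adj F vi x}"
          then show "y \<in> {y. adj E v y}" using v adjE vij T_def by (auto simp: adj_def)
        qed
        moreover have "vj \<notin> {x\<in>R. adj F vi x}" using RS by auto
        ultimately show ?thesis using cnt finR by simp
      next
        assume v: "v = vj"
        have "{y. adj E v y} = insert vi {x\<in>R. adj F vj x}"
        proof (intro set_eqI iffI)
          fix y assume "y \<in> {y. adj E v y}"
          then have y: "vj \<noteq> y" "y \<in> T" "{vj,y} \<in> F \<or> {vj,y} = {vi,vj}" using adjE v by auto
          show "y \<in> insert vi {x\<in>R. adj F vj x}"
          proof (cases "y = vi")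
            case False
            then have "{vj,y} \<in> F" using y by (auto simp: doubleton_eq_iff)
            then show ?thesis using y T_def by (auto simp: adj_def)
          qed simp
        next
          fix y assume "y \<in> insert vi {x\<in>R. adj F vj x}"
          then show "y \<in> {y. adj E v y}" using v adjE vij T_def by (auto simp: adj_def insert_commute)
        qed
        moreover have "vi \<notin> {x\<in>R. adj F vj x}" using RS by auto
        ultimately show ?thesis using cnt finR by simp
      qed
    qed
  qed
  define rel where "rel = (\<lambda>x y. x \<in> T \<and> y \<in> T \<and> adj E x y)"
  have rel_sym: "\<And>x y. rel x y \<Longrightarrow> rel y x" unfolding rel_def using adjE by (auto simp: insert_commute)
  have relI: "\<And>x y. x \<in> T \<Longrightarrow> y \<in> T \<Longrightarrow> adj F x y \<Longrightarrow> rel x y"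
  proof -
    fix x y assume xy: "x \<in> T" "y \<in> T" "adj F x y"
    then have "x \<noteq> y" "{x,y} \<in> F" by (simp_all add: adj_def)
    then show "rel x y" unfolding rel_def using xy adjE by simp
  qed
  have reachR: "\<And>y. y \<in> R \<Longrightarrow> rel\<^sup>*\<^sup>* a y"
  proof -
    fix y assume "y \<in> R"
    then have "Q\<^sup>*\<^sup>* a y" by (simp add: R_def ccomp_def)
    then show "rel\<^sup>*\<^sup>* a y"
    proof (induction rule: rtranclp_induct)
      case base then show ?case by simp
    next
      case (step z y)
      have "z \<in> R" "y \<in> R" using step(1,2) by (auto simp: R_def ccomp_def)
      moreover have "adj F z y" using step(2) by (simp add: Q_def)
      ultimately have "rel z y" using relI T_def by simp
      then show ?case using step(3) by simp
    qed
  qed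
  have reach: "\<And>y. y \<in> T \<Longrightarrow> rel\<^sup>*\<^sup>* a y"
  proof -
    fix y assume yT: "y \<in> T"
    show "rel\<^sup>*\<^sup>* a y"
    proof (cases "y \<in> R")
      case True then show ?thesis using reachR by simp
    next
      case False
      then have "y = vi \<or> y = vj" using yT T_def by auto
      then show ?thesis
      proof
        assume y: "y = vi"
        have "rel a vi" using relI aR va adj_sym T_def by simp
        then show ?thesis using y by simp
      next
        assume y: "y = vj"
        have "{x\<in>R. adj F vj x} \<noteq> {}" using cnt(2) by (metis card.empty zero_neq_one)
        then obtain x where x: "x \<in> R" "adj F vj x" by blast
        have "rel x vj" using relI x adj_sym T_def by simp
        then show ?thesis using reachR[OF x(1)] y by simp
      qed
    qed
  qed
  have connT: "graph_connected T E"
    unfolding graph_connected_def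
  proof (intro conjI ballI)
    show "T \<noteq> {}" using T_def by simp
    fix u w assume "u \<in> T" "w \<in> T"
    then have "rel\<^sup>*\<^sup>* a u" "rel\<^sup>*\<^sup>* a w" using reach by simp_all
    then have "rel\<^sup>*\<^sup>* u a" "rel\<^sup>*\<^sup>* a w" using rtranclp_sym'[of rel, OF rel_sym] by simp_all
    then have "rel\<^sup>*\<^sup>* u w" by (rule rtranclp_trans)
    then show "(\<lambda>x y. x \<in> T \<and> y \<in> T \<and> adj E x y)\<^sup>*\<^sup>* u w" unfolding rel_def .
  qed
  have "is_cycle T E"
    unfolding is_cycle_def
  proof (intro conjI ballI)
    show "finite T" using finR T_def by simp
    have "R \<noteq> {}" using aR by blast
    then have "0 < card R" using finR by (simp add: card_gt_0_iff)
    then show "3 \<le> card T" using cT by simp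
    show "graph_connected T E" by (rule connT)
    fix e assume "e \<in> E" then show "e \<subseteq> T" by (simp add: E_def)
  next
    fix v assume "v \<in> T"
    then show "card {e \<in> E. v \<in> e} = 2" using degT nbr_card[OF two'] by simp
  qed
  then show "is_cycle (ccomp a \<union> {vi,vj}) {f \<in> insert {vi,vj} F. f \<subseteq> ccomp a \<union> {vi,vj}}"
    using T_def E_def R_def by simp
  show "card (ccomp a \<union> {vi,vj}) = card (ccomp a) + 2" using cT T_def R_def by simp
qed


lemma cyc_structure:
  "\<exists>a b. a \<in> S \<and> b \<in> S \<and> adj F vi a \<and> adj F vi b \<and> a \<noteq> b \<and> ccomp a \<inter> ccomp b = {} \<and>
         S = ccomp a \<union> ccomp b \<union> {vi,vj}"
proof -
  obtain a b where ab: "{y. adj F vi y} = {a,b}" "a \<noteq> b"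
    using deg[OF vi] card_2_iff by metis
  have va: "adj F vi a" and vb: "adj F vi b" using ab(1) by (simp_all add: set_eq_iff)
  have aS: "a \<in> S" and bS: "b \<in> S" using va vb adj_in by blast+
  have a: "a \<in> S - {vi,vj}" using aS va adj_irr nadj by auto
  have b: "b \<in> S - {vi,vj}" using bS vb adj_irr nadj by auto
  have ca: "card {x\<in>ccomp a. adj F vi x} = 1" "card {x\<in>ccomp a. adj F vj x} = 1"
    using counts[OF aS va] by auto
  have cb: "card {x\<in>ccomp b. adj F vi x} = 1" "card {x\<in>ccomp b. adj F vj x} = 1"
    using counts[OF bS vb] by auto
  have bna: "b \<notin> ccomp a"
  proof
    assume "b \<in> ccomp a"
    then have "{a,b} \<subseteq> {x\<in>ccomp a. adj F vi x}" using va vb comp_self by auto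
    then have "card {a,b} \<le> card {x\<in>ccomp a. adj F vi x}"
      using card_mono comp_fin[OF a] by (metis (no_types, lifting) finite_subset mem_Collect_eq subsetI)
    then show False using ca ab(2) by simp
  qed
  have dj: "ccomp a \<inter> ccomp b = {}"
  proof (rule ccontr)
    assume "ccomp a \<inter> ccomp b \<noteq> {}"
    then obtain y where "Q\<^sup>*\<^sup>* a y" "Q\<^sup>*\<^sup>* b y" by (auto simp: ccomp_def)
    then have "Q\<^sup>*\<^sup>* a y" "Q\<^sup>*\<^sup>* y b" using rtranclp_sym'[of Q, OF Q_sym] by simp_all
    then have "Q\<^sup>*\<^sup>* a b" by (rule rtranclp_trans)
    then show False using bna by (simp add: ccomp_def)
  qed
  have one: "\<And>X. finite X \<Longrightarrow> card X = 1 \<Longrightarrow> \<exists>x. x \<in> X" by (metis card.empty ex_in_conv zero_neq_one)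
  obtain x1 where x1: "x1 \<in> ccomp a" "adj F vj x1" using one[OF _ ca(2)] comp_fin[OF a] by auto
  obtain x2 where x2: "x2 \<in> ccomp b" "adj F vj x2" using one[OF _ cb(2)] comp_fin[OF b] by auto
  have "x1 \<noteq> x2" using x1 x2 dj by blast
  then have vjN: "{y. adj F vj y} = {x1,x2}"
    using card_subset_eq[OF nbr_fin, of "{x1,x2}"] deg[OF vj] x1 x2 by auto
  have "ccomp a \<union> ccomp b \<union> {vi,vj} = S"
  proof (rule conn_closed[OF conn])
    show "ccomp a \<union> ccomp b \<union> {vi,vj} \<subseteq> S" using comp_sub[OF a] comp_sub[OF b] vi vj by auto
    show "vi \<in> ccomp a \<union> ccomp b \<union> {vi,vj}" by simp
    show "\<forall>x\<in>ccomp a \<union> ccomp b \<union> {vi,vj}. \<forall>y\<in>S. adj F x y \<longrightarrow> y \<in> ccomp a \<union> ccomp b \<union> {vi,vj}"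
    proof (intro ballI impI)
      fix x y assume x: "x \<in> ccomp a \<union> ccomp b \<union> {vi,vj}" and "y \<in> S" and xy: "adj F x y"
      show "y \<in> ccomp a \<union> ccomp b \<union> {vi,vj}"
      proof -
        have "x \<in> ccomp a \<or> x \<in> ccomp b \<or> x = vi \<or> x = vj" using x by blast
        moreover
        { assume "x \<in> ccomp a" then have ?thesis using comp_closed[OF a _ xy] by blast }
        moreover
        { assume "x \<in> ccomp b" then have ?thesis using comp_closed[OF b _ xy] by blast }
        moreover
        { assume "x = vi" then have "y \<in> {a,b}" using ab(1) xy by blast
          then have ?thesis using comp_self by blast }
        moreover
        { assume "x = vj" then have "y \<in> {x1,x2}" using vjN xy by blast
          then have ?thesis using x1 x2 by blast }
        ultimately show ?thesis by blast
      qed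
    qed
  qed
  then show ?thesis using aS bS va vb ab(2) dj by blast
qed

end

lemma ex_max_clique:
  assumes fin: "finite V" and C: "is_clique V Ed C"
  shows "\<exists>M. maximal_clique V Ed M \<and> C \<subseteq> M"
proof -
  define Cs where "Cs = {X. is_clique V Ed X \<and> C \<subseteq> X}"
  have finCs: "finite Cs"
    by (rule finite_subset[of _ "Pow V"]) (use fin in \<open>auto simp: Cs_def is_clique_def\<close>)
  have "C \<in> Cs" using C Cs_def by simp
  then have ne: "card ` Cs \<noteq> {}" by blast
  define m where "m = Max (card ` Cs)"
  have "m \<in> card ` Cs" using Max_in[OF finite_imageI[OF finCs] ne] m_def by simp
  then obtain M where M: "M \<in> Cs" "card M = m" by blast
  have Mmax: "\<And>X. X \<in> Cs \<Longrightarrow> card X \<le> m"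
    using Max_ge[OF finite_imageI[OF finCs]] m_def by blast
  have "maximal_clique V Ed M"
    unfolding maximal_clique_def
  proof (intro conjI allI impI)
    show "is_clique V Ed M" using M Cs_def by simp
    fix K' assume K': "is_clique V Ed K' \<and> M \<subseteq> K'"
    then have "K' \<in> Cs" using M Cs_def by auto
    then have "card K' \<le> card M" using Mmax M by simp
    moreover have "finite K'" using K' fin finite_subset unfolding is_clique_def by blast
    ultimately show "K' = M" using K' card_seteq by blast
  qed
  then show ?thesis using M Cs_def by auto
qed

lemma tri_K:
  assumes sg: "simple_graph V Ed" and uniq: "\<forall>K'. maximal_clique V Ed K' \<and> card K' \<ge> 3 \<longrightarrow> K' = K"
    and C: "is_clique V Ed C" and c3: "card C \<ge> 3"
  shows "C \<subseteq> K"
proof -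
  have fin: "finite V" using sg by (simp add: simple_graph_def)
  obtain M where M: "maximal_clique V Ed M" "C \<subseteq> M" using ex_max_clique[OF fin C] by blast
  have "finite M" using M fin finite_subset unfolding maximal_clique_def is_clique_def by blast
  then have "card M \<ge> 3" using card_mono[OF _ M(2)] c3 by simp
  then have "M = K" using uniq M by blast
  then show ?thesis using M by simp
qed


lemma new_hole:
  assumes sg: "simple_graph V Ed"
    and dis: "\<forall>H1\<in>holes V Ed. \<forall>H2\<in>holes V Ed. H1 \<noteq> H2 \<longrightarrow>
           induced_edges Ed H1 \<inter> induced_edges Ed H2 = {}"
    and Kmax: "maximal_clique V Ed K"
    and uniq: "\<forall>K'. maximal_clique V Ed K' \<and> card K' \<ge> 3 \<longrightarrow> K' = K"
    and H: "H \<in> holes V Ed" and eH: "e \<in> induced_edges Ed H"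
    and e: "e = {vi,vj}" and vij: "vi \<noteq> vj"
    and Snew: "S \<in> holes V (Ed - {e})" and Sold: "S \<notin> holes V Ed"
  shows "vi \<in> K \<and> vj \<in> K \<and> (\<exists>vk\<in>K.
         induced_edges (Ed - {e}) S = (induced_edges Ed H - {e}) \<union> {{vi, vk}, {vj, vk}})"
proof -
  define F where "F = induced_edges (Ed - {e}) S"
  have SV: "S \<subseteq> V" and S4: "card S \<ge> 4" and cyc: "is_cycle S F"
    using Snew by (simp_all add: holes_def is_hole_def F_def)
  have eEd: "e \<in> Ed" using eH by (simp add: induced_edges_def)
  have edges: "\<forall>f\<in>Ed. \<exists>u v. f = {u,v} \<and> u \<noteq> v" using sg unfolding simple_graph_def by metis
  have two: "\<forall>f\<in>F. \<exists>u v. f = {u,v} \<and> u \<noteq> v" using edges by (auto simp: F_def induced_edges_def)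
  have eS: "e \<subseteq> S"
  proof (rule ccontr)
    assume ne: "\<not> e \<subseteq> S"
    have "induced_edges Ed S = F" using ne by (auto simp: F_def induced_edges_def)
    then have "S \<in> holes V Ed" using SV S4 cyc by (simp add: holes_def is_hole_def)
    then show False using Sold by simp
  qed
  then have vi: "vi \<in> S" and vj: "vj \<in> S" using e by auto
  have nadj: "\<not> adj F vi vj" using e by (simp add: adj_def F_def induced_edges_def)
  note ctx = cyc two vi vj vij nadj
  have IEeq: "\<And>T. T \<subseteq> S \<Longrightarrow> vi \<in> T \<Longrightarrow> vj \<in> T \<Longrightarrow>
       induced_edges Ed T = {f \<in> insert {vi,vj} F. f \<subseteq> T}"
    using eEd e by (auto simp: F_def induced_edges_def)
  obtain a b where ab: "a \<in> S" "b \<in> S" "adj F vi a" "adj F vi b" "a \<noteq> b"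
    "ccomp S F vi vj a \<inter> ccomp S F vi vj b = {}"
    "S = ccomp S F vi vj a \<union> ccomp S F vi vj b \<union> {vi,vj}"
    using cyc_structure[OF ctx] by blast
  have degS: "\<And>v. v \<in> S \<Longrightarrow> card {y. adj F v y} = 2" using deg[OF ctx] by blast
  have cfacts: "\<And>c. c \<in> S \<Longrightarrow> adj F vi c \<Longrightarrow>
      ccomp S F vi vj c \<noteq> {} \<and> ccomp S F vi vj c \<subseteq> S - {vi,vj} \<and>
      (card (ccomp S F vi vj c) \<ge> 2 \<longrightarrow> ccomp S F vi vj c \<union> {vi,vj} = H) \<and>
      (card (ccomp S F vi vj c) \<le> 1 \<longrightarrow> (\<exists>k. ccomp S F vi vj c = {k} \<and> adj F vi k \<and> adj F vj k \<and> k \<in> K \<and> vi \<in> K \<and> vj \<in> K))"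
  proof -
    fix c assume cS: "c \<in> S" and vc: "adj F vi c"
    have c: "c \<in> S - {vi,vj}" using cS vc nadj by (auto simp: adj_def)
    define R where "R = ccomp S F vi vj c"
    have finR: "finite R" using comp_fin[OF ctx c] R_def by simp
    have RS: "R \<subseteq> S - {vi,vj}" using comp_sub[OF ctx c] R_def by simp
    have cR: "c \<in> R" using comp_self[OF ctx] R_def by simp
    have cyT: "is_cycle (R \<union> {vi,vj}) (induced_edges Ed (R \<union> {vi,vj}))"
    proof -
      have "induced_edges Ed (R \<union> {vi,vj}) = {f \<in> insert {vi,vj} F. f \<subseteq> R \<union> {vi,vj}}"
        using IEeq[of "R \<union> {vi,vj}"] RS vi vj by blast
      then show ?thesis using comp_cycle(1)[OF ctx cS vc] R_def by simp
    qed
    have cT: "card (R \<union> {vi,vj}) = card R + 2" using comp_cycle(2)[OF ctx cS vc] R_def by simp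
    have cnt: "card {x\<in>R. adj F vi x} = 1" "card {x\<in>R. adj F vj x} = 1"
      using counts[OF ctx cS vc] R_def by auto
    have big: "card R \<ge> 2 \<longrightarrow> R \<union> {vi,vj} = H"
    proof
      assume c2: "card R \<ge> 2"
      have "R \<union> {vi,vj} \<subseteq> V" using RS SV vi vj by blast
      moreover have "card (R \<union> {vi,vj}) \<ge> 4" using cT c2 by simp
      ultimately have hole: "R \<union> {vi,vj} \<in> holes V Ed" using cyT
        by (simp add: holes_def is_hole_def)
      have eT: "e \<in> induced_edges Ed (R \<union> {vi,vj})" using eEd e by (simp add: induced_edges_def)
      show "R \<union> {vi,vj} = H"
      proof (rule ccontr)
        assume ne: "R \<union> {vi,vj} \<noteq> H"
        have "induced_edges Ed (R \<union> {vi,vj}) \<inter> induced_edges Ed H = {}"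
          using dis[rule_format, OF hole H ne] .
        then show False using eT eH by blast
      qed
    qed
    have small: "card R \<le> 1 \<longrightarrow> (\<exists>k. R = {k} \<and> adj F vi k \<and> adj F vj k \<and> k \<in> K \<and> vi \<in> K \<and> vj \<in> K)"
    proof
      assume "card R \<le> 1"
      moreover have "card R \<noteq> 0" using finR cR by auto
      ultimately have "card R = 1" by simp
      then obtain k where k: "R = {k}" using card_1_singleton_iff[of R] by auto
      have n1: "{x\<in>R. adj F vi x} \<noteq> {}" using cnt(1) by (metis card.empty zero_neq_one)
      have n2: "{x\<in>R. adj F vj x} \<noteq> {}" using cnt(2) by (metis card.empty zero_neq_one)
      have vk1: "adj F vi k" using n1 unfolding k by (simp split: if_splits)
      have vk2: "adj F vj k" using n2 unfolding k by (simp split: if_splits)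
      note vk = vk1 vk2
      have kS: "k \<notin> {vi,vj}" using RS k by auto
      have "is_clique V Ed {vi,vj,k}"
        unfolding is_clique_def
      proof (intro conjI ballI impI)
        show "{vi,vj,k} \<subseteq> V" using vi vj RS k SV by auto
        have E1: "{vi,vj} \<in> Ed" using eEd e by simp
        have E2: "{vi,k} \<in> Ed" "{vj,k} \<in> Ed" using vk by (auto simp: adj_def F_def induced_edges_def)
        fix u w assume "u \<in> {vi,vj,k}" "w \<in> {vi,vj,k}" "u \<noteq> w"
        moreover have "{vj,vi} \<in> Ed" "{k,vi} \<in> Ed" "{k,vj} \<in> Ed" using E1 E2 by (simp_all add: insert_commute)
        ultimately show "{u,w} \<in> Ed" using E1 E2 by auto
      qed
      moreover have "card {vi,vj,k} \<ge> 3" using kS vij by auto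
      ultimately have "{vi,vj,k} \<subseteq> K" using tri_K[OF sg uniq] by blast
      then show "\<exists>k. R = {k} \<and> adj F vi k \<and> adj F vj k \<and> k \<in> K \<and> vi \<in> K \<and> vj \<in> K" using k vk by auto
    qed
    show "ccomp S F vi vj c \<noteq> {} \<and> ccomp S F vi vj c \<subseteq> S - {vi,vj} \<and>
      (card (ccomp S F vi vj c) \<ge> 2 \<longrightarrow> ccomp S F vi vj c \<union> {vi,vj} = H) \<and>
      (card (ccomp S F vi vj c) \<le> 1 \<longrightarrow> (\<exists>k. ccomp S F vi vj c = {k} \<and> adj F vi k \<and> adj F vj k \<and> k \<in> K \<and> vi \<in> K \<and> vj \<in> K))"
      unfolding R_def[symmetric] using big small cR RS by blast
  qed
  let ?G = "vi \<in> K \<and> vj \<in> K \<and> (\<exists>vk\<in>K. F = (induced_edges Ed H - {e}) \<union> {{vi, vk}, {vj, vk}})"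
  have fin_fact: "\<And>k D D'. D' = {k} \<Longrightarrow> D \<inter> D' = {} \<Longrightarrow> S = D' \<union> D \<union> {vi,vj} \<Longrightarrow>
       adj F vi k \<Longrightarrow> adj F vj k \<Longrightarrow> k \<in> K \<Longrightarrow> vi \<in> K \<Longrightarrow> vj \<in> K \<Longrightarrow> D \<union> {vi,vj} = H \<Longrightarrow> k \<notin> {vi,vj} \<Longrightarrow>
       ?G"
  proof -
    fix k D D' assume D': "D' = {k}" and dj: "D \<inter> D' = {}" and SD: "S = D' \<union> D \<union> {vi,vj}"
      and vk: "adj F vi k" "adj F vj k" and kK: "k \<in> K" and viK: "vi \<in> K" "vj \<in> K" and DH: "D \<union> {vi,vj} = H"
      and kv: "k \<notin> {vi,vj}"
    have Sk: "S = insert k H" using SD D' DH by auto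
    have kH: "k \<notin> H" using DH dj D' kv by auto
    have kS: "k \<in> S" using Sk by simp
    have nk: "{y. adj F k y} = {vi,vj}"
    proof -
      have "{vi,vj} \<subseteq> {y. adj F k y}" using vk adj_sym[OF ctx] by blast
      moreover have "card {vi,vj} = 2" using vij by simp
      ultimately show ?thesis using card_subset_eq[OF nbr_fin[OF ctx]] degS[OF kS] by metis
    qed
    have "F = (induced_edges Ed H - {e}) \<union> {{vi, k}, {vj, k}}"
    proof
      show "F \<subseteq> (induced_edges Ed H - {e}) \<union> {{vi, k}, {vj, k}}"
      proof
        fix f assume fF: "f \<in> F"
        then obtain u w where uw: "f = {u,w}" "u \<noteq> w" using two by blast
        show "f \<in> (induced_edges Ed H - {e}) \<union> {{vi, k}, {vj, k}}"
        proof (cases "k \<in> f")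
          case True
          then obtain y where y: "f = {k,y}" "k \<noteq> y" using uw by auto
          then have "adj F k y" using fF by (simp add: adj_def)
          then have "y = vi \<or> y = vj" using nk by blast
          then show ?thesis using y by (auto simp: insert_commute)
        next
          case False
          then have "f \<subseteq> H" using fF Sk by (auto simp: F_def induced_edges_def)
          then show ?thesis using fF by (auto simp: F_def induced_edges_def)
        qed
      qed
      show "(induced_edges Ed H - {e}) \<union> {{vi, k}, {vj, k}} \<subseteq> F"
      proof -
        have "induced_edges Ed H - {e} \<subseteq> F" using Sk by (auto simp: F_def induced_edges_def)
        moreover have "{vi,k} \<in> F" "{vj,k} \<in> F" using vk by (simp_all add: adj_def insert_commute)
        ultimately show ?thesis by blast
      qed
    qed
    then show ?G using kK viK by blast
  qed
  have Ca: "ccomp S F vi vj a \<noteq> {}" "ccomp S F vi vj a \<subseteq> S - {vi,vj}" using cfacts[OF ab(1,3)] by blast+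
  have Cb: "ccomp S F vi vj b \<noteq> {}" "ccomp S F vi vj b \<subseteq> S - {vi,vj}" using cfacts[OF ab(2,4)] by blast+
  have ?G
  proof (cases "card (ccomp S F vi vj a) \<le> 1")
    case Ta: True
    then obtain k where k: "ccomp S F vi vj a = {k}" "adj F vi k" "adj F vj k" "k \<in> K" "vi \<in> K" "vj \<in> K"
      using cfacts[OF ab(1,3)] by blast
    show ?thesis
    proof (cases "card (ccomp S F vi vj b) \<le> 1")
      case True
      then obtain l where l: "ccomp S F vi vj b = {l}" "adj F vi l" "adj F vj l" "l \<in> K" "vi \<in> K" "vj \<in> K"
        using cfacts[OF ab(2,4)] by blast
      have kl: "k \<noteq> l" using k l ab(6) by auto
      have kS: "k \<in> S - {vi,vj}" "l \<in> S - {vi,vj}" using k(1) l(1) Ca Cb by auto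
      have "{k,l} \<in> Ed" using Kmax k(4) l(4) kl by (simp add: maximal_clique_def is_clique_def)
      moreover have "{k,l} \<noteq> e" using kS e by (auto simp: doubleton_eq_iff)
      ultimately have "adj F k l" using kl kS by (simp add: adj_def F_def induced_edges_def)
      then have "{vi,vj,l} \<subseteq> {y. adj F k y}" using k l adj_sym[OF ctx] by blast
      moreover have "card {vi,vj,l} = 3" using vij kS by auto
      ultimately have "3 \<le> card {y. adj F k y}" using card_mono[OF nbr_fin[OF ctx]] by metis
      then show ?thesis using degS kS by simp
    next
      case False
      then have "ccomp S F vi vj b \<union> {vi,vj} = H" using cfacts[OF ab(2,4)] by simp
      moreover have "k \<notin> {vi,vj}" using k(1) Ca by auto
      ultimately show ?thesis using fin_fact[OF k(1) _ _ k(2,3,4,5,6)] ab(6,7) by blast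
    qed
  next
    case Fa: False
    then have Ha: "ccomp S F vi vj a \<union> {vi,vj} = H" using cfacts[OF ab(1,3)] by simp
    show ?thesis
    proof (cases "card (ccomp S F vi vj b) \<le> 1")
      case True
      then obtain k where k: "ccomp S F vi vj b = {k}" "adj F vi k" "adj F vj k" "k \<in> K" "vi \<in> K" "vj \<in> K"
        using cfacts[OF ab(2,4)] by blast
      moreover have "k \<notin> {vi,vj}" using k(1) Cb by auto
      moreover have "S = ccomp S F vi vj b \<union> ccomp S F vi vj a \<union> {vi,vj}" using ab(7) by blast
      ultimately show ?thesis using fin_fact[OF k(1) _ _ k(2,3,4,5,6) Ha] ab(6) by blast
    next
      case False
      then have "ccomp S F vi vj b \<union> {vi,vj} = H" using cfacts[OF ab(2,4)] by simp
      then have "ccomp S F vi vj a = ccomp S F vi vj b" using Ha Ca Cb by blast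
      then show ?thesis using ab(6) Ca by blast
    qed
  qed
  then show ?thesis using F_def by simp
qed


theorem lemma4:
  fixes V :: "'a set" and Ed :: "'a set set" and K H :: "'a set" and e :: "'a set" and h :: nat
  assumes "simple_graph V Ed"
    and "graph_connected V Ed"
    and "card (holes V Ed) = h"
    and "\<forall>H1\<in>holes V Ed. \<forall>H2\<in>holes V Ed. H1 \<noteq> H2 \<longrightarrow>
           induced_edges Ed H1 \<inter> induced_edges Ed H2 = {}"
    and "maximal_clique V Ed K" and "card K \<ge> 3"
    and "\<forall>K'. maximal_clique V Ed K' \<and> card K' \<ge> 3 \<longrightarrow> K' = K"
    and "H \<in> holes V Ed" and "e \<in> induced_edges Ed H"
    and "card (holes V (Ed - {e})) \<ge> h"
  shows "e \<subseteq> K \<and>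
    (\<forall>vi vj. e = {vi, vj} \<longrightarrow>
      (\<forall>H' \<in> holes V (Ed - {e}) - holes V Ed. \<exists>vk\<in>K.
         induced_edges (Ed - {e}) H' = (induced_edges Ed H - {e}) \<union> {{vi, vk}, {vj, vk}}))"
proof -
  note sg = assms(1) and dis = assms(4) and Kmax = assms(5) and uniq = assms(7)
    and H = assms(8) and eH = assms(9)
  have eEd: "e \<in> Ed" and eHs: "e \<subseteq> H" using eH by (simp_all add: induced_edges_def)
  have sgE: "\<forall>f\<in>Ed. \<exists>u v. f = {u,v} \<and> u \<noteq> v \<and> u \<in> V \<and> v \<in> V" using sg by (simp add: simple_graph_def)
  obtain vi vj where e: "e = {vi,vj}" "vi \<noteq> vj" using sgE eEd by blast
  have finV: "finite V" using sg by (simp add: simple_graph_def)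
  have finH: "\<And>X. finite (holes V X)"
    by (rule finite_subset[of _ "Pow V"]) (use finV in \<open>auto simp: holes_def is_hole_def\<close>)
  have Hnot: "H \<notin> holes V (Ed - {e})"
  proof
    assume "H \<in> holes V (Ed - {e})"
    then have cy: "is_cycle H (induced_edges (Ed - {e}) H)" by (simp add: holes_def is_hole_def)
    have cyH: "is_cycle H (induced_edges Ed H)" using H by (simp add: holes_def is_hole_def)
    have viH: "vi \<in> H" using eHs e by simp
    have c1: "card {f \<in> induced_edges (Ed - {e}) H. vi \<in> f} = 2" using cy viH by (simp add: is_cycle_def)
    have c2: "card {f \<in> induced_edges Ed H. vi \<in> f} = 2" using cyH viH by (simp add: is_cycle_def)
    have eq: "{f \<in> induced_edges (Ed - {e}) H. vi \<in> f} = {f \<in> induced_edges Ed H. vi \<in> f} - {e}"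
      by (auto simp: induced_edges_def)
    have ein: "e \<in> {f \<in> induced_edges Ed H. vi \<in> f}" using eH e by simp
    have "finite {f \<in> induced_edges Ed H. vi \<in> f}" using c2 by (metis card.infinite zero_neq_numeral)
    then have "card ({f \<in> induced_edges Ed H. vi \<in> f} - {e}) = 1" using ein c2 by simp
    then show False using c1 eq by simp
  qed
  have exS: "\<exists>S. S \<in> holes V (Ed - {e}) \<and> S \<notin> holes V Ed"
  proof (rule ccontr)
    assume "\<not> ?thesis"
    then have nn: "\<And>X. X \<in> holes V (Ed - {e}) \<Longrightarrow> X \<in> holes V Ed" by blast
    have sub: "holes V (Ed - {e}) \<subseteq> holes V Ed - {H}"
    proof
      fix X assume X: "X \<in> holes V (Ed - {e})"
      then have "X \<noteq> H" using Hnot by metis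
      then show "X \<in> holes V Ed - {H}" using nn[OF X] by simp
    qed
    have "card (holes V (Ed - {e})) \<le> card (holes V Ed - {H})"
      by (rule card_mono[OF _ sub]) (simp add: finH)
    also have "\<dots> = h - 1" using card_Diff_singleton[OF H] assms(3) by simp
    finally have le: "card (holes V (Ed - {e})) \<le> h - 1" .
    have "holes V Ed \<noteq> {}" using H by blast
    then have "0 < card (holes V Ed)" using finH[of Ed] by (simp add: card_gt_0_iff)
    then have "0 < h" using assms(3) by simp
    then show False using le assms(10) by linarith
  qed
  then obtain S where S: "S \<in> holes V (Ed - {e})" "S \<notin> holes V Ed" by blast
  have "vi \<in> K \<and> vj \<in> K" using new_hole[OF sg dis Kmax uniq H eH e S] by blast
  then have eK: "e \<subseteq> K" using e by simp
  have rest: "\<forall>vi vj. e = {vi, vj} \<longrightarrow>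
      (\<forall>H' \<in> holes V (Ed - {e}) - holes V Ed. \<exists>vk\<in>K.
         induced_edges (Ed - {e}) H' = (induced_edges Ed H - {e}) \<union> {{vi, vk}, {vj, vk}})"
  proof (intro allI impI ballI)
    fix ui uj H' assume eu: "e = {ui,uj}" and H': "H' \<in> holes V (Ed - {e}) - holes V Ed"
    have "ui \<noteq> uj" using eu e by auto
    then show "\<exists>vk\<in>K. induced_edges (Ed - {e}) H' = (induced_edges Ed H - {e}) \<union> {{ui, vk}, {uj, vk}}"
      using new_hole[OF sg dis Kmax uniq H eH eu _] H' by blast
  qed
  show ?thesis using eK rest by blast
qed


end
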